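(* Let $\gamma$ be an admissible path. Then for any $t$ and $s$ in the domain of $\gamma$ with $t<s<t+\pi$, we have $|\gamma(s)-\gamma(t)|\ge 2\sin\frac{s-t}{2}$.
   Context: An admissible path is a continuously differentiable planar curve $\gamma$ parameterized by arclength (so $\gamma'(t)$ is a unit tangent vector) such that for all $t<s<t+\pi$ in its domain, the angle $\alpha(s,t)$ between the directions $\gamma'(s)$ and $\gamma'(t)$ satisfies $\alpha(s,t)\le s-t$ (mean curvature bounded by 1). *)

theory Defs
  imports "HOL-Analysis.Analysis"
begin

definition vec_angle :: "complex \<Rightarrow> complex \<Rightarrow> real" where
  "vec_angle u v = arccos ((u \<bullet> v) / (norm u * norm v))"

definition admissible_path :: "real set \<Rightarrow> (real \<Rightarrow> complex) \<Rightarrow> (real \<Rightarrow> complex) \<Rightarrow> bool" where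
  "admissible_path I \<gamma> \<gamma>' \<longleftrightarrow>
     is_interval I \<and>
     (\<forall>t\<in>I. (\<gamma> has_vector_derivative \<gamma>' t) (at t within I)) \<and>
     continuous_on I \<gamma>' \<and>
     (\<forall>t\<in>I. norm (\<gamma>' t) = 1) \<and>
     (\<forall>t\<in>I. \<forall>s\<in>I. t < s \<and> s < t + pi \<longrightarrow> vec_angle (\<gamma>' s) (\<gamma>' t) \<le> s - t)"

end

theory Submission
  imports Defs
begin

theorem lemma15:
  fixes I :: "real set" and \<gamma> \<gamma>' :: "real \<Rightarrow> complex" and s t :: real
  assumes "admissible_path I \<gamma> \<gamma>'"
    and "t \<in> I" and "s \<in> I" and "t < s" and "s < t + pi"
  shows "norm (\<gamma> s - \<gamma> t) \<ge> 2 * sin ((s - t) / 2)"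
proof -
  note A = assms(1)[unfolded admissible_path_def]
  have iv: "is_interval I" and der: "\<And>r. r \<in> I \<Longrightarrow> (\<gamma> has_vector_derivative \<gamma>' r) (at r within I)"
    and nrm: "\<And>r. r \<in> I \<Longrightarrow> norm (\<gamma>' r) = 1"
    and ang: "\<And>a b. a \<in> I \<Longrightarrow> b \<in> I \<Longrightarrow> a < b \<Longrightarrow> b < a + pi \<Longrightarrow> vec_angle (\<gamma>' b) (\<gamma>' a) \<le> b - a"
    using A by auto
  have sub: "{t..s} \<subseteq> I"
    using iv assms(2,3) by (metis atLeastAtMost_iff is_interval_1 subsetI)
  define m where "m = (s + t) / 2"
  have mI: "m \<in> I" using sub assms(4) by (auto simp: m_def)
  define u where "u = \<gamma>' m"
  have nu: "norm u = 1" using nrm mI u_def by simp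
  have cosang: "cos (vec_angle a b) = a \<bullet> b" if "norm a = 1" "norm b = 1" for a b :: complex
  proof -
    have "\<bar>a \<bullet> b\<bar> \<le> 1" using Cauchy_Schwarz_ineq2[of a b] that by simp
    then show ?thesis unfolding vec_angle_def using that by (simp add: cos_arccos_abs)
  qed
  have angnn: "vec_angle a b \<ge> 0" if "norm a = 1" "norm b = 1" for a b :: complex
  proof -
    have "\<bar>a \<bullet> b\<bar> \<le> 1" using Cauchy_Schwarz_ineq2[of a b] that by simp
    then show ?thesis unfolding vec_angle_def using that by (intro arccos_lbound) auto
  qed
  have key: "\<gamma>' r \<bullet> u \<ge> cos (r - m)" if r: "t < r" "r < s" for r
  proof -
    have rI: "r \<in> I" using sub r by auto
    have nr: "norm (\<gamma>' r) = 1" using nrm rI by simp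
    have lt: "\<bar>r - m\<bar> < pi / 2" using r assms(5) unfolding m_def by (simp add: abs_if field_simps; linarith)
    have "vec_angle (\<gamma>' r) u \<le> \<bar>r - m\<bar> \<and> \<gamma>' r \<bullet> u = cos (vec_angle (\<gamma>' r) u)"
    proof (cases "r = m")
      case True
      then show ?thesis using cosang[OF nr nu] u_def nr
        by (simp add: vec_angle_def power2_norm_eq_inner[symmetric])
    next
      case False
      show ?thesis
      proof (cases "r > m")
        case True
        have "vec_angle (\<gamma>' r) u \<le> r - m" proof -
          have "r < m + pi" using lt True pi_gt3 by (simp add: abs_if)
          then show ?thesis using ang[OF mI rI True] u_def by simp
        qed
        then show ?thesis using True cosang[OF nr nu] by simp
      next
        case F: False
        with False have "r < m" by simp
        then have "vec_angle u (\<gamma>' r) \<le> m - r" proof -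
          have "m < r + pi" using lt \<open>r < m\<close> pi_gt3 by (simp add: abs_if)
          then show ?thesis using ang[OF rI mI \<open>r < m\<close>] u_def by simp
        qed
        moreover have "vec_angle u (\<gamma>' r) = vec_angle (\<gamma>' r) u"
          unfolding vec_angle_def by (simp add: inner_commute mult.commute)
        ultimately show ?thesis using \<open>r < m\<close> cosang[OF nr nu] by simp
      qed
    qed
    moreover have "cos \<bar>r - m\<bar> \<le> cos (vec_angle (\<gamma>' r) u)"
      by (rule cos_monotone_0_pi_le) (use calculation angnn[OF nr nu] lt pi_gt3 in auto)
    ultimately show ?thesis by simp
  qed
  define g where "g r = \<gamma> r \<bullet> u - sin (r - m)" for r
  have gder: "(g has_real_derivative (\<gamma>' r \<bullet> u - cos (r - m))) (at r within I)" if "r \<in> I" for r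
  proof -
    have "((\<lambda>x. \<gamma> x \<bullet> u) has_vector_derivative (\<gamma>' r \<bullet> u)) (at r within I)"
      by (rule bounded_linear.has_vector_derivative[OF bounded_linear_inner_left der[OF that]])
    then have "((\<lambda>x. \<gamma> x \<bullet> u) has_real_derivative (\<gamma>' r \<bullet> u)) (at r within I)"
      by (simp add: has_real_derivative_iff_has_vector_derivative)
    then show ?thesis unfolding g_def
      by (auto intro!: derivative_eq_intros)
  qed
  have "g t \<le> g s"
  proof (rule DERIV_nonneg_imp_increasing_open[of t s g])
    show "t \<le> s" using assms(4) by simp
    fix x assume x: "t < x" "x < s"
    have xI: "x \<in> I" using sub x by auto
    have "(g has_real_derivative (\<gamma>' x \<bullet> u - cos (x - m))) (at x within {t<..<s})"
      by (rule DERIV_subset[OF gder[OF xI]]) (use sub in auto)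
    then have "(g has_real_derivative (\<gamma>' x \<bullet> u - cos (x - m))) (at x)"
      using x by (simp add: at_within_open[of x "{t<..<s}"])
    then show "\<exists>y. DERIV g x :> y \<and> y \<ge> 0" using key[OF x] by auto
  next
    have "continuous_on I g"
      unfolding continuous_on_eq_continuous_within
    proof
      fix x assume "x \<in> I"
      from DERIV_continuous[OF gder[OF this]] show "continuous (at x within I) g" .
    qed
    then show "continuous_on {t..s} g" by (rule continuous_on_subset[OF _ sub])
  qed
  then have "(\<gamma> s - \<gamma> t) \<bullet> u \<ge> sin (s - m) - sin (t - m)"
    unfolding g_def by (simp add: inner_diff_left)
  moreover have "sin (s - m) - sin (t - m) = 2 * sin ((s - t) / 2)"
  proof -
    have "s - m = (s - t) / 2" "t - m = - ((s - t) / 2)" unfolding m_def by (simp_all add: field_simps)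
    then show ?thesis by (simp only:) simp
  qed
  moreover have "(\<gamma> s - \<gamma> t) \<bullet> u \<le> norm (\<gamma> s - \<gamma> t)"
    using norm_cauchy_schwarz[of "\<gamma> s - \<gamma> t" u] nu by simp
  ultimately show ?thesis by linarith
qed

end
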